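(* Let $X\sim\mathsf{Bernoulli}(p)$ with $p\in[\frac12,1)$ and let $P_{Y|X}=\mathsf{BIBO}(\alpha,\beta)$ (i.e. $P_{Y|X}(\cdot|0)=(\bar\alpha,\alpha)$, $P_{Y|X}(\cdot|1)=(\beta,\bar\beta)$) with $\alpha,\beta\in[0,\frac12)$ and $\bar\alpha\bar p>\beta p$. Then $g^\infty(0)>0$ if and only if $\alpha\bar\alpha\bar p^2<\beta\bar\beta p^2$ and $p\in(\frac12,1)$.
   Context: For $a\in[0,1]$, $\bar a=1-a$; $\Pr(X=1)=p$. For discrete random variables, $\mathsf{P}_{\mathsf{c}}(X)=\max_xP_X(x)$, $\mathsf{P}_{\mathsf{c}}(X|Z)=\sum_z\max_xP_{XZ}(x,z)$, and $I_\infty(X;Z)=\log\frac{\mathsf{P}_{\mathsf{c}}(X|Z)}{\mathsf{P}_{\mathsf{c}}(X)}$ (Arimoto's mutual information of order $\infty$). For $\varepsilon\ge0$, $g^\infty(\varepsilon)=\sup\{I_\infty(Y;Z): P_{Z|Y},\ X - Y - Z,\ I_\infty(X;Z)\le\varepsilon\}$, the supremum over channels $P_{Z|Y}$ into finite alphabets with $X - Y - Z$ a Markov chain. (Equivalently, $g^\infty(0)>0$ means that some such $Z$ with $\mathsf{P}_{\mathsf{c}}(X|Z)=\mathsf{P}_{\mathsf{c}}(X)$ has $\mathsf{P}_{\mathsf{c}}(Y|Z)>\mathsf{P}_{\mathsf{c}}(Y)$.) *)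

theory Defs
  imports Complex_Main
begin

text \<open>Binary alphabets are {0,1} :: nat set.  A channel into a finite alphabet
  {0..<n} is a row-stochastic matrix W y z (y in {0,1}, z < n).\<close>

definition bern :: "real \<Rightarrow> nat \<Rightarrow> real" where
  "bern p x = (if x = 1 then p else 1 - p)"

definition bibo :: "real \<Rightarrow> real \<Rightarrow> nat \<Rightarrow> nat \<Rightarrow> real" where
  "bibo \<alpha> \<beta> x y = (if x = 0 then (if y = 0 then 1 - \<alpha> else \<alpha>)
                                else (if y = 0 then \<beta> else 1 - \<beta>))"

definition channel :: "nat \<Rightarrow> (nat \<Rightarrow> nat \<Rightarrow> real) \<Rightarrow> bool" where
  "channel n W \<longleftrightarrow> (\<forall>y\<in>{0,1}. (\<forall>z<n. 0 \<le> W y z) \<and> (\<Sum>z<n. W y z) = 1)"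

definition Pc :: "('a \<Rightarrow> real) \<Rightarrow> 'a set \<Rightarrow> real" where
  "Pc P A = Max (P ` A)"

definition Pc_cond :: "('a \<Rightarrow> 'b \<Rightarrow> real) \<Rightarrow> 'a set \<Rightarrow> 'b set \<Rightarrow> real" where
  "Pc_cond P A B = (\<Sum>z\<in>B. Max ((\<lambda>x. P x z) ` A))"

definition I_inf :: "('a \<Rightarrow> 'b \<Rightarrow> real) \<Rightarrow> 'a set \<Rightarrow> 'b set \<Rightarrow> real" where
  "I_inf P A B = ln (Pc_cond P A B / Pc (\<lambda>x. \<Sum>z\<in>B. P x z) A)"

definition PXZ :: "real \<Rightarrow> real \<Rightarrow> real \<Rightarrow> (nat \<Rightarrow> nat \<Rightarrow> real) \<Rightarrow> nat \<Rightarrow> nat \<Rightarrow> real" where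
  "PXZ p \<alpha> \<beta> W x z = (\<Sum>y\<in>{0,1}. bern p x * bibo \<alpha> \<beta> x y * W y z)"

definition PYZ :: "real \<Rightarrow> real \<Rightarrow> real \<Rightarrow> (nat \<Rightarrow> nat \<Rightarrow> real) \<Rightarrow> nat \<Rightarrow> nat \<Rightarrow> real" where
  "PYZ p \<alpha> \<beta> W y z = (\<Sum>x\<in>{0,1}. bern p x * bibo \<alpha> \<beta> x y * W y z)"

definition g_inf :: "real \<Rightarrow> real \<Rightarrow> real \<Rightarrow> real \<Rightarrow> real" where
  "g_inf p \<alpha> \<beta> \<epsilon> = Sup {I_inf (PYZ p \<alpha> \<beta> W) {0,1} {..<n} | n W.
       channel n W \<and> I_inf (PXZ p \<alpha> \<beta> W) {0,1} {..<n} \<le> \<epsilon>}"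

end

theory Submission
  imports Defs
begin

lemma Max01[simp]: "Max (f ` {0::nat,1}) = max (f 0) (f 1)"
  by simp

lemma PXZ0: "PXZ p \<alpha> \<beta> W 0 z = (1-p)*((1-\<alpha>)*W 0 z + \<alpha>*W 1 z)"
  by (simp add: PXZ_def bern_def bibo_def algebra_simps)
lemma PXZ1: "PXZ p \<alpha> \<beta> W 1 z = p*(\<beta>*W 0 z + (1-\<beta>)*W 1 z)"
  by (simp add: PXZ_def bern_def bibo_def algebra_simps)
lemma PYZ0: "PYZ p \<alpha> \<beta> W 0 z = ((1-p)*(1-\<alpha>) + p*\<beta>)*W 0 z"
  by (simp add: PYZ_def bern_def bibo_def algebra_simps)
lemma PYZ1: "PYZ p \<alpha> \<beta> W 1 z = ((1-p)*\<alpha> + p*(1-\<beta>))*W 1 z"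
  by (simp add: PYZ_def bern_def bibo_def algebra_simps)

lemmas PXZ1' = PXZ1[simplified] 
lemmas PYZ1' = PYZ1[simplified]

lemma chan:
  assumes "channel n W"
  shows "(\<Sum>z<n. W 0 z) = 1" "(\<Sum>z<n. W 1 z) = 1" "\<And>z. z < n \<Longrightarrow> 0 \<le> W 0 z"
    "\<And>z. z < n \<Longrightarrow> 0 \<le> W 1 z"
  using assms by (auto simp: channel_def)

lemma IY:
  "I_inf (PYZ p \<alpha> \<beta> W) {0,1} {..<n} =
    ln ((\<Sum>z<n. max (((1-p)*(1-\<alpha>) + p*\<beta>)*W 0 z) (((1-p)*\<alpha> + p*(1-\<beta>))*W 1 z))
       / max (((1-p)*(1-\<alpha>) + p*\<beta>) * (\<Sum>z<n. W 0 z)) (((1-p)*\<alpha> + p*(1-\<beta>)) * (\<Sum>z<n. W 1 z)))"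
  by (simp add: I_inf_def Pc_cond_def Pc_def PYZ0 PYZ1' sum_distrib_left)

lemma IX:
  assumes "channel n W" "1/2 \<le> p" "p < 1"
  shows "I_inf (PXZ p \<alpha> \<beta> W) {0,1} {..<n} \<le> 0 \<longleftrightarrow>
     (\<forall>z<n. (1-p)*((1-\<alpha>)*W 0 z + \<alpha>*W 1 z) \<le> p*(\<beta>*W 0 z + (1-\<beta>)*W 1 z))"
proof -
  define P0 where "P0 z = (1-p)*((1-\<alpha>)*W 0 z + \<alpha>*W 1 z)" for z
  define P1 where "P1 z = p*(\<beta>*W 0 z + (1-\<beta>)*W 1 z)" for z
  note c = chan[OF assms(1)]
  have "(\<Sum>z<n. P1 z) = (\<Sum>z<n. (p*\<beta>)*W 0 z + (p*(1-\<beta>))*W 1 z)" unfolding P1_def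
    by (simp add: algebra_simps)
  also have "\<dots> = p*\<beta>*(\<Sum>z<n. W 0 z) + p*(1-\<beta>)*(\<Sum>z<n. W 1 z)"
    by (simp add: sum.distrib sum_distrib_left)
  finally have s1: "(\<Sum>z<n. P1 z) = p" using c(1,2) by (simp add: algebra_simps)
  have "(\<Sum>z<n. P0 z) = (\<Sum>z<n. ((1-p)*(1-\<alpha>))*W 0 z + ((1-p)*\<alpha>)*W 1 z)" unfolding P0_def
    by (simp add: algebra_simps)
  also have "\<dots> = (1-p)*(1-\<alpha>)*(\<Sum>z<n. W 0 z) + (1-p)*\<alpha>*(\<Sum>z<n. W 1 z)"
    by (simp add: sum.distrib sum_distrib_left)
  finally have s0: "(\<Sum>z<n. P0 z) = 1-p" using c(1,2) by (simp add: algebra_simps)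
  have e0: "PXZ p \<alpha> \<beta> W 0 = P0" by (rule ext) (simp add: PXZ0 P0_def)
  have e1: "PXZ p \<alpha> \<beta> W 1 = P1" by (rule ext) (simp add: PXZ1' P1_def)
  have mx: "max (1-p) p = p" using assms(2) by simp
  have I: "I_inf (PXZ p \<alpha> \<beta> W) {0,1} {..<n} = ln ((\<Sum>z<n. max (P0 z) (P1 z)) / p)"
    unfolding I_inf_def Pc_cond_def Pc_def Max01 e0 e1 s0 s1 mx ..
  have ge: "(\<Sum>z<n. P1 z) \<le> (\<Sum>z<n. max (P0 z) (P1 z))" by (rule sum_mono) simp
  have pp: "p > 0" using assms by simp
  have "I_inf (PXZ p \<alpha> \<beta> W) {0,1} {..<n} \<le> 0 \<longleftrightarrow> (\<Sum>z<n. max (P0 z) (P1 z)) \<le> p"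
    unfolding I using ge s1 pp by (simp add: ln_le_zero_iff divide_le_eq_1)
  also have "\<dots> \<longleftrightarrow> (\<Sum>z<n. max (P0 z) (P1 z) - P1 z) \<le> 0"
    by (simp add: sum_subtractf s1)
  also have "\<dots> \<longleftrightarrow> (\<forall>z<n. max (P0 z) (P1 z) - P1 z = 0)"
  proof -
    have "(\<Sum>z<n. max (P0 z) (P1 z) - P1 z) \<ge> 0" by (rule sum_nonneg) simp
    then have "(\<Sum>z<n. max (P0 z) (P1 z) - P1 z) \<le> 0 \<longleftrightarrow> (\<Sum>z<n. max (P0 z) (P1 z) - P1 z) = 0"
      by linarith
    also have "\<dots> \<longleftrightarrow> (\<forall>z<n. max (P0 z) (P1 z) - P1 z = 0)"
      by (subst sum_nonneg_eq_0_iff) auto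
    finally show ?thesis .
  qed
  also have "\<dots> \<longleftrightarrow> (\<forall>z<n. P0 z \<le> P1 z)" by (auto simp: max_def)
  finally show ?thesis by (simp add: P0_def P1_def)
qed

lemma IX2:
  assumes "channel n W" "1/2 \<le> p" "p < 1"
  shows "I_inf (PXZ p \<alpha> \<beta> W) {0,1} {..<n} \<le> 0 \<longleftrightarrow>
     (\<forall>z<n. ((1-p)*(1-\<alpha>) - p*\<beta>) * W 0 z \<le> (p*(1-\<beta>) - (1-p)*\<alpha>) * W 1 z)"
  unfolding IX[OF assms] by (simp add: algebra_simps)

lemma IY2:
  assumes "channel n W"
  shows "I_inf (PYZ p \<alpha> \<beta> W) {0,1} {..<n} =
    ln ((\<Sum>z<n. max (((1-p)*(1-\<alpha>) + p*\<beta>)*W 0 z) (((1-p)*\<alpha> + p*(1-\<beta>))*W 1 z))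
       / max ((1-p)*(1-\<alpha>) + p*\<beta>) ((1-p)*\<alpha> + p*(1-\<beta>)))"
  unfolding IY using chan[OF assms] by simp

theorem corollary2:
  fixes p \<alpha> \<beta> :: real
  assumes "1/2 \<le> p" and "p < 1"
    and "0 \<le> \<alpha>" and "\<alpha> < 1/2" and "0 \<le> \<beta>" and "\<beta> < 1/2"
    and "(1 - \<alpha>) * (1 - p) > \<beta> * p"
  shows "g_inf p \<alpha> \<beta> 0 > 0 \<longleftrightarrow>
           (\<alpha> * (1 - \<alpha>) * (1 - p)^2 < \<beta> * (1 - \<beta>) * p^2 \<and> 1/2 < p)"
proof -
  define A where "A = (1-p)*(1-\<alpha>) - p*\<beta>"
  define B where "B = p*(1-\<beta>) - (1-p)*\<alpha>"
  define C where "C = (1-p)*(1-\<alpha>) + p*\<beta>"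
  define D where "D = (1-p)*\<alpha> + p*(1-\<beta>)"
  have Ap: "A > 0" using assms(7) by (simp add: A_def algebra_simps)
  have Bp: "B > 0"
  proof -
    have "(1-p)*\<alpha> \<le> (1-p)*(1/2)" using assms by (intro mult_left_mono) auto
    moreover have "p*(1/2) < p*(1-\<beta>)" using assms by (intro mult_strict_left_mono) auto
    moreover have "(1-p)*(1/2) \<le> p*(1/2)" using assms(1) by simp
    ultimately show ?thesis unfolding B_def by linarith
  qed
  have "p*\<beta> \<ge> 0" "(1-p)*\<alpha> \<ge> 0" using assms by auto
  then have Cp: "C > 0" and Dp: "D > 0" using Ap Bp unfolding A_def B_def C_def D_def by linarith+
  have iden: "B*C - A*D = 2*(\<beta> * (1 - \<beta>) * p^2 - \<alpha> * (1 - \<alpha>) * (1 - p)^2)"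
    unfolding A_def B_def C_def D_def by (simp add: algebra_simps power2_eq_square)
  define S where "S = {I_inf (PYZ p \<alpha> \<beta> W) {0,1} {..<n} | n W.
       channel n W \<and> I_inf (PXZ p \<alpha> \<beta> W) {0,1} {..<n} \<le> 0}"
  have g: "g_inf p \<alpha> \<beta> 0 = Sup S" unfolding g_inf_def S_def ..
  have elem: "\<exists>n W. channel n W \<and> (\<forall>z<n. A * W 0 z \<le> B * W 1 z) \<and>
      x = ln ((\<Sum>z<n. max (C*W 0 z) (D*W 1 z)) / max C D)" if xS: "x \<in> S" for x
  proof -
    obtain n W where ch: "channel n W" and le: "I_inf (PXZ p \<alpha> \<beta> W) {0,1} {..<n} \<le> 0"
      and x: "x = I_inf (PYZ p \<alpha> \<beta> W) {0,1} {..<n}"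
      using xS unfolding S_def by blast
    have "\<forall>z<n. A * W 0 z \<le> B * W 1 z" using le unfolding IX2[OF ch assms(1,2)] A_def B_def .
    moreover have "x = ln ((\<Sum>z<n. max (C*W 0 z) (D*W 1 z)) / max C D)"
      unfolding x IY2[OF ch] C_def D_def ..
    ultimately show ?thesis using ch by blast
  qed
  have ne: "S \<noteq> {}"
  proof -
    have ch: "channel 1 (\<lambda>_ _. 1)" by (simp add: channel_def)
    have "I_inf (PXZ p \<alpha> \<beta> (\<lambda>_ _. 1)) {0,1} {..<1} \<le> 0"
      unfolding IX2[OF ch assms(1,2)] using Ap Bp assms(1) by (simp add: A_def B_def algebra_simps)
    then show ?thesis unfolding S_def using ch by blast
  qed
  have bdd: "bdd_above S"
  proof (rule bdd_aboveI)
    fix x assume "x \<in> S"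
    then obtain n W where ch: "channel n W" and x: "x = ln ((\<Sum>z<n. max (C*W 0 z) (D*W 1 z)) / max C D)"
      using elem by blast
    note c = chan[OF ch]
    define T where "T = (\<Sum>z<n. max (C*W 0 z) (D*W 1 z))"
    have "D = (\<Sum>z<n. D*W 1 z)" using c by (simp flip: sum_distrib_left)
    also have "\<dots> \<le> T" unfolding T_def by (rule sum_mono) simp
    finally have T1: "D \<le> T" .
    have "T \<le> (\<Sum>z<n. C*W 0 z + D*W 1 z)" unfolding T_def
      by (rule sum_mono) (use c Cp Dp in auto)
    also have "\<dots> = C + D" using c by (simp add: sum.distrib flip: sum_distrib_left)
    finally have T2: "T \<le> C + D" .
    have M: "D \<le> max C D" by simp
    have pos: "0 < T / max C D" using T1 Dp by simp
    have "x \<le> T / max C D - 1" unfolding x T_def[symmetric] using pos by (rule ln_le_minus_one)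
    also have "T / max C D \<le> T / D" using M Dp T1 by (intro divide_left_mono) auto
    also have "T / D \<le> (C+D)/D" using T2 Dp by (intro divide_right_mono) auto
    finally show "x \<le> (C+D)/D" by simp
  qed
  show ?thesis
  proof
    assume gp: "g_inf p \<alpha> \<beta> 0 > 0"
    show "\<alpha> * (1 - \<alpha>) * (1 - p)^2 < \<beta> * (1 - \<beta>) * p^2 \<and> 1/2 < p"
    proof (rule ccontr)
      assume nc: "\<not> ?thesis"
      have "\<forall>x\<in>S. x \<le> 0"
      proof
        fix x assume "x \<in> S"
        then obtain n W where ch: "channel n W" and AB: "\<forall>z<n. A * W 0 z \<le> B * W 1 z"
          and x: "x = ln ((\<Sum>z<n. max (C*W 0 z) (D*W 1 z)) / max C D)"
          using elem by blast
        note c = chan[OF ch]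
        show "x \<le> 0"
        proof (cases "1/2 < p")
          case False
          then have pe: "p = 1/2" using assms(1) by simp
          then have "A = B" by (simp add: A_def B_def algebra_simps)
          then have le: "\<forall>z<n. W 0 z \<le> W 1 z" using AB Ap by auto
          have "(\<Sum>z<n. W 1 z - W 0 z) = 0" using c by (simp add: sum_subtractf)
          then have "\<forall>z<n. W 1 z - W 0 z = 0"
            by (subst (asm) sum_nonneg_eq_0_iff) (use le in auto)
          then have "(\<Sum>z<n. max (C*W 0 z) (D*W 1 z)) = (\<Sum>z<n. max C D * W 0 z)"
            by (intro sum.cong) (use c in \<open>auto simp: max_mult_distrib_right\<close>)
          also have "\<dots> = max C D" using c by (simp flip: sum_distrib_left)
          finally show ?thesis unfolding x using Cp by simp
        next
          case True
          then have "B*C \<le> A*D" using nc iden by simp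
          have "\<forall>z<n. C * W 0 z \<le> D * W 1 z"
          proof (intro allI impI)
            fix z assume z: "z < n"
            have "B * (C * W 0 z) \<le> A * D * W 0 z"
              using \<open>B*C \<le> A*D\<close> c(3)[OF z] by (simp add: mult_right_mono flip: mult.assoc)
            also have "\<dots> = D * (A * W 0 z)" by simp
            also have "\<dots> \<le> D * (B * W 1 z)" using AB z Dp by (intro mult_left_mono) auto
            also have "\<dots> = B * (D * W 1 z)" by simp
            finally show "C * W 0 z \<le> D * W 1 z" using Bp by simp
          qed
          then have "(\<Sum>z<n. max (C*W 0 z) (D*W 1 z)) = (\<Sum>z<n. D * W 1 z)"
            by (intro sum.cong) auto
          also have "\<dots> = D" using c by (simp flip: sum_distrib_left)
          finally have "x = ln (D / max C D)" unfolding x by simp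
          also have "\<dots> \<le> 0" using Dp by (subst ln_le_zero_iff) auto
          finally show ?thesis .
        qed
      qed
      then have "Sup S \<le> 0" using ne by (intro cSup_least) auto
      then show False using gp g by simp
    qed
  next
    assume cd: "\<alpha> * (1 - \<alpha>) * (1 - p)^2 < \<beta> * (1 - \<beta>) * p^2 \<and> 1/2 < p"
    define r where "r = A / B"
    have r0: "0 \<le> r" using Ap Bp by (simp add: r_def)
    have "A < B" using cd by (simp add: A_def B_def algebra_simps)
    then have r1: "r < 1" using Bp by (simp add: r_def)
    have "A * D < B * C" using cd iden by simp
    then have rC: "D * r < C" using Bp by (simp add: r_def field_simps)
    define W :: "nat \<Rightarrow> nat \<Rightarrow> real" where
      "W y z = (if y = 0 then (if z = 0 then 1 else 0) else (if z = 0 then r else 1 - r))" for y z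
    have two: "{..<2::nat} = {0,1}" by auto
    have ch: "channel 2 W" unfolding channel_def two using r0 r1 by (auto simp: W_def)
    have "\<forall>z<2. A * W 0 z \<le> B * W 1 z"
    proof (intro allI impI)
      fix z :: nat assume "z < 2"
      then have "z = 0 \<or> z = 1" by auto
      then show "A * W 0 z \<le> B * W 1 z"
        using Ap Bp r0 r1 by (auto simp: W_def r_def)
    qed
    then have "I_inf (PXZ p \<alpha> \<beta> W) {0,1} {..<2} \<le> 0"
      using IX2[OF ch assms(1,2)] unfolding A_def B_def by simp
    then have inS: "I_inf (PYZ p \<alpha> \<beta> W) {0,1} {..<2} \<in> S" unfolding S_def using ch by blast
    have val: "I_inf (PYZ p \<alpha> \<beta> W) {0,1} {..<2} = ln ((C + D*(1-r)) / max C D)"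
      unfolding IY2[OF ch] C_def[symmetric] D_def[symmetric]
      unfolding two using rC Dp r1 by (simp add: W_def)
    have "D*r < D" using Dp r1 by simp
    then have "max C D < C + D*(1-r)" using rC Dp r1 by (auto simp: max_def algebra_simps)
    then have "1 < (C + D*(1-r)) / max C D" using Cp by simp
    then have "0 < I_inf (PYZ p \<alpha> \<beta> W) {0,1} {..<2}" unfolding val by simp
    also have "\<dots> \<le> Sup S" using inS bdd by (rule cSup_upper)
    finally show "g_inf p \<alpha> \<beta> 0 > 0" using g by simp
  qed
qed

end
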